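(* Let $n\ge2$, let $(K,g_K)$ be a closed Riemannian manifold of dimension $n-1$, let $f,\tilde f\in C^\infty([0,1])$ be positive, $M=[0,1]\times K$ with metrics $g=f(x)(dx^2+g_K)$, $\tilde g=\tilde f(x)(dx^2+g_K)$, and $\lambda\in\mathbb{R}$ outside the Dirichlet spectra of $-\Delta_g$ and $-\Delta_{\tilde g}$. Assume that for every $m\in\mathbb{N}$, $\det(\Lambda_g^m(\lambda))=\det(\Lambda_{\tilde g}^m(\lambda))$ and $\mathrm{Tr}(\Lambda_g^m(\lambda))=\mathrm{Tr}(\Lambda_{\tilde g}^m(\lambda))$. Then either ($f(0)=\tilde f(0)$ and $f(1)=\tilde f(1)$) or ($f(0)=\tilde f(1)$ and $f(1)=\tilde f(0)$).
   Context: Let $(Y_m)_{m\in\mathbb{N}}$ be an orthonormal basis of $L^2(K)$ of eigenfunctions of $-\Delta_{g_K}$ with eigenvalues $0=\mu_0<\mu_1\le\cdots\to\infty$. The DN map $\Lambda_g(\lambda)$ sends boundary data $\psi\in H^{1/2}(\partial M)=H^{1/2}(\{0\}\times K)\oplus H^{1/2}(\{1\}\times K)$ to the unit outer normal derivative $\partial_\nu u|_{\partial M}$ of the solution $u$ of $-\Delta_g u=\lambda u$, $u|_{\partial M}=\psi$. It maps the span of $(Y_m,0),(0,Y_m)$ into itself; $\Lambda_g^m(\lambda)$ is this restriction as a $2\times2$ matrix in that basis. Same for $\tilde g$. *)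

theory Defs
  imports "HOL-Analysis.Analysis"
begin

text \<open>Separating variables u = v(x) Y_m(y) in -Delta_g u = lam u, with
  -Delta_K Y_m = mu Y_m, gives the radial equation
  (h v')' = (h mu - lam rho) v,  h = f powr ((n-2)/2), rho = f powr (n/2).\<close>

definition radial_bvp_sol ::
  "(real \<Rightarrow> real) \<Rightarrow> nat \<Rightarrow> real \<Rightarrow> real \<Rightarrow> real \<Rightarrow> real
     \<Rightarrow> (real \<Rightarrow> real) \<Rightarrow> (real \<Rightarrow> real) \<Rightarrow> bool" where
  "radial_bvp_sol f n mu lam a b v w \<longleftrightarrow>
     v 0 = a \<and> v 1 = b \<and>
     (\<forall>x\<in>{0..1}.
        (v has_real_derivative w x) (at x within {0..1}) \<and>
        ((\<lambda>t. f t powr ((real n - 2) / 2) * w t) has_real_derivative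
           ((f x powr ((real n - 2) / 2) * mu - lam * f x powr (real n / 2)) * v x))
          (at x within {0..1}))"

text \<open>Dirichlet-to-Neumann map on the m-th mode: boundary data (a,b) = values at
  {0} x K and {1} x K; output = unit outer normal derivatives
  (-f(0)^(-1/2) v'(0), f(1)^(-1/2) v'(1)).\<close>

definition dn_mode :: "(real \<Rightarrow> real) \<Rightarrow> nat \<Rightarrow> real \<Rightarrow> real \<Rightarrow> real \<Rightarrow> real \<Rightarrow> real \<times> real" where
  "dn_mode f n mu lam a b =
     (THE pq. \<exists>v w. radial_bvp_sol f n mu lam a b v w \<and>
                   pq = (- w 0 / sqrt (f 0), w 1 / sqrt (f 1)))"

text \<open>The 2x2 matrix of the DN map restricted to span{(Y_m,0),(0,Y_m)}:
  column j is the image of the j-th basis vector.\<close>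

definition dn_matrix :: "(real \<Rightarrow> real) \<Rightarrow> nat \<Rightarrow> real \<Rightarrow> real \<Rightarrow> real^2^2" where
  "dn_matrix f n mu lam =
     (\<chi> i j. let pq = (if j = 1 then dn_mode f n mu lam 1 0 else dn_mode f n mu lam 0 1)
             in if i = 1 then fst pq else snd pq)"

text \<open>lam is not a Dirichlet eigenvalue of -Delta_g (expressed mode-wise:
  the homogeneous radial problem has only the trivial solution for every mode).\<close>

definition not_dirichlet_eigenvalue :: "(real \<Rightarrow> real) \<Rightarrow> nat \<Rightarrow> (nat \<Rightarrow> real) \<Rightarrow> real \<Rightarrow> bool" where
  "not_dirichlet_eigenvalue f n mu lam \<longleftrightarrow>
     (\<forall>m v w. radial_bvp_sol f n (mu m) lam 0 0 v w \<longrightarrow> (\<forall>x\<in>{0..1}. v x = 0))"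

definition smooth_fun :: "(real \<Rightarrow> real) \<Rightarrow> bool" where
  "smooth_fun f \<longleftrightarrow>
     (\<forall>k x. ((deriv ^^ k) f has_real_derivative (deriv ^^ Suc k) f x) (at x))"

end

theory Submission
  imports Defs "HOL-Real_Asymp.Real_Asymp"
begin


lemma endpoint0:
  fixes g :: "real \<Rightarrow> real"
  assumes "\<forall>x\<in>{0..1}. g x \<ge> 0" "g 0 = 0" "(g has_real_derivative D) (at 0 within {0..1})"
  shows "D \<ge> 0"
proof -
  have lim: "((\<lambda>y. (g y - g 0) / (y - 0)) \<longlongrightarrow> D) (at 0 within {0..1})"
    using assms(3) has_field_derivative_iff by blast
  have nt: "at (0::real) within {0..1} \<noteq> bot"
    by (simp add: at_within_Icc_at_right at_within_Icc_at_left)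
  have ev: "eventually (\<lambda>y. (g y - g 0) / (y - 0) \<ge> 0) (at 0 within {0..1})"
    unfolding eventually_at_filter using assms(1,2) by (auto intro!: always_eventually)
  show ?thesis using tendsto_lowerbound[OF lim ev nt] .
qed

lemma endpoint1:
  fixes g :: "real \<Rightarrow> real"
  assumes "\<forall>x\<in>{0..1}. g x \<ge> 0" "g 1 = 0" "(g has_real_derivative D) (at 1 within {0..1})"
  shows "D \<le> 0"
proof -
  have lim: "((\<lambda>y. (g y - g 1) / (y - 1)) \<longlongrightarrow> D) (at 1 within {0..1})"
    using assms(3) has_field_derivative_iff by blast
  have nt: "at (1::real) within {0..1} \<noteq> bot"
    by (simp add: at_within_Icc_at_right at_within_Icc_at_left)
  have ev: "eventually (\<lambda>y. (g y - g 1) / (y - 1) \<le> 0) (at 1 within {0..1})"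
    unfolding eventually_at_filter using assms(1,2)
    by (auto intro!: always_eventually simp: divide_nonneg_neg)
  show ?thesis using tendsto_upperbound[OF lim ev nt] .
qed


lemma max_principle:
  fixes d dd h q r :: "real \<Rightarrow> real"
  assumes hpos: "\<forall>x\<in>{0..1}. h x > 0" and qpos: "\<forall>x\<in>{0..1}. q x > 0"
  and dder: "\<forall>x\<in>{0..1}. (d has_real_derivative dd x) (at x within {0..1})"
  and pder: "\<forall>x\<in>{0<..<1}. ((\<lambda>t. h t * dd t) has_real_derivative r x) (at x)"
  and rle: "\<forall>x\<in>{0<..<1}. r x \<le> q x * d x"
  and d0: "d 0 \<ge> 0" and d1: "d 1 \<ge> 0"
  shows "\<forall>x\<in>{0..1}. d x \<ge> 0"
proof (rule ccontr)
  assume "\<not> ?thesis"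
  then obtain x1 where x1: "x1 \<in> {0..1}" "d x1 < 0" by force
  have cont: "continuous_on {0..1} d" using dder by (intro DERIV_continuous_on) auto
  obtain x0 where x0: "x0 \<in> {0..1}" "\<forall>y\<in>{0..1}. d x0 \<le> d y"
    using continuous_attains_inf[OF compact_Icc _ cont] by auto
  have dx0: "d x0 < 0" using x0 x1 by force
  have x0i: "0 < x0" "x0 < 1" using dx0 d0 d1 x0(1)
    by (metis atLeastAtMost_iff less_eq_real_def not_le)+
  have dat: "\<And>x. 0 < x \<Longrightarrow> x < 1 \<Longrightarrow> (d has_real_derivative dd x) (at x)"
    using dder at_within_Icc_at by (metis atLeastAtMost_iff less_eq_real_def)
  have ddx0: "dd x0 = 0"
  proof (rule DERIV_local_min[OF dat[OF x0i]])
    show "0 < min x0 (1 - x0)" using x0i by simp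
    show "\<forall>y. \<bar>x0 - y\<bar> < min x0 (1 - x0) \<longrightarrow> d x0 \<le> d y"
      using x0(2) by (auto simp: abs_if split: if_splits)
  qed
  have "isCont d x0" using dat[OF x0i] by (rule DERIV_isCont)
  then have "eventually (\<lambda>y. d y < 0) (at x0)"
    using dx0 by (metis isCont_def order_tendstoD(2))
  then obtain e where e: "e > 0" "\<And>y. y \<noteq> x0 \<Longrightarrow> dist y x0 < e \<Longrightarrow> d y < 0"
    unfolding eventually_at by auto
  define y0 where "y0 = x0 - min e x0 / 2"
  have y0: "0 < y0" "y0 < x0" using e x0i by (auto simp: y0_def)
  have neg: "\<And>t. y0 \<le> t \<Longrightarrow> t \<le> x0 \<Longrightarrow> d t < 0"
  proof -
    fix t assume t: "y0 \<le> t" "t \<le> x0"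
    show "d t < 0"
    proof (cases "t = x0")
      case True then show ?thesis using dx0 by simp
    next
      case False then show ?thesis using t e y0 by (intro e(2)) (auto simp: dist_real_def y0_def)
    qed
  qed
  have ddpos: "dd t > 0" if t: "y0 \<le> t" "t < x0" for t
  proof -
    obtain z where z: "t < z" "z < x0"
      "h x0 * dd x0 - h t * dd t = (x0 - t) * r z"
      using MVT2[OF t(2), of "\<lambda>t. h t * dd t" r] pder t y0 x0i by force
    have "r z \<le> q z * d z" using rle z t y0 x0i by auto
    also have "\<dots> < 0" using qpos neg[of z] z t x0i y0 by (intro mult_pos_neg) auto
    finally have "(x0 - t) * r z < 0" using z t by (intro mult_pos_neg) auto
    then have "h t * dd t > 0" using z(3) ddx0 by simp
    moreover have "h t > 0" using hpos t y0 x0i by auto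
    ultimately show ?thesis by (simp add: zero_less_mult_iff)
  qed
  obtain z where z: "y0 < z" "z < x0" "d x0 - d y0 = (x0 - y0) * dd z"
    using MVT2[OF y0(2), of d dd] dat y0 x0i by force
  have "(x0 - y0) * dd z > 0" using z ddpos[of z] by simp
  then have "d y0 < d x0" using z by simp
  moreover have "y0 \<in> {0..1}" using y0 x0i by simp
  ultimately show False using x0(2) by force
qed


definition tf :: "real \<Rightarrow> real \<Rightarrow> real \<Rightarrow> real \<Rightarrow> real \<Rightarrow> real \<Rightarrow> real" where
  "tf al c1 be c2 ga x = al * exp (c1 * x) + be * exp (c2 * x) + ga"
definition tf' :: "real \<Rightarrow> real \<Rightarrow> real \<Rightarrow> real \<Rightarrow> real \<Rightarrow> real" where
  "tf' al c1 be c2 x = al * c1 * exp (c1 * x) + be * c2 * exp (c2 * x)"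

lemma tf_deriv: "(tf al c1 be c2 ga has_real_derivative tf' al c1 be c2 x) (at x)"
  unfolding tf_def tf'_def by (auto intro!: derivative_eq_intros)

locale rad =
  fixes h h' q :: "real \<Rightarrow> real"
  assumes hpos: "\<forall>x\<in>{0..1}. h x > 0"
  and hder: "\<forall>x\<in>{0..1}. (h has_real_derivative h' x) (at x)"
  and qpos: "\<forall>x\<in>{0..1}. q x > 0"
begin

definition sol :: "(real \<Rightarrow> real) \<Rightarrow> (real \<Rightarrow> real) \<Rightarrow> bool" where
  "sol v w \<longleftrightarrow> (\<forall>x\<in>{0..1}. (v has_real_derivative w x) (at x within {0..1}) \<and>
      ((\<lambda>t. h t * w t) has_real_derivative q x * v x) (at x within {0..1}))"

definition Lc :: "real \<Rightarrow> real \<Rightarrow> real" where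
  "Lc c x = h x * c\<^sup>2 + h' x * c - q x"

lemma tf_pder:
  assumes "x \<in> {0..1}"
  shows "((\<lambda>t. h t * tf' al c1 be c2 t) has_real_derivative
     al * Lc c1 x * exp (c1 * x) + be * Lc c2 x * exp (c2 * x) + q x * (tf al c1 be c2 0 x)) (at x)"
proof -
  have "((\<lambda>t. h t * tf' al c1 be c2 t) has_real_derivative
     h' x * tf' al c1 be c2 x + h x * (al * c1 * (c1 * exp (c1 * x)) + be * c2 * (c2 * exp (c2 * x)))) (at x)"
    unfolding tf'_def using hder assms by (auto intro!: derivative_eq_intros)
  moreover have "h' x * tf' al c1 be c2 x + h x * (al * c1 * (c1 * exp (c1 * x)) + be * c2 * (c2 * exp (c2 * x)))
     = al * Lc c1 x * exp (c1 * x) + be * Lc c2 x * exp (c2 * x) + q x * (tf al c1 be c2 0 x)"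
    unfolding tf'_def tf_def Lc_def by (simp add: algebra_simps power2_eq_square)
  ultimately show ?thesis by simp
qed

lemma interior_at:
  assumes "((\<lambda>t. h t * w t) has_real_derivative D) (at x within {0..1})" "0 < x" "x < 1"
  shows "((\<lambda>t. h t * w t) has_real_derivative D) (at x)"
  using assms at_within_Icc_at by metis

lemma super_cmp:
  assumes s: "sol v w"
  and c1: "\<forall>x\<in>{0..1}. al * Lc c1 x \<le> 0" and c2: "\<forall>x\<in>{0..1}. be * Lc c2 x \<le> 0" and ga: "ga \<ge> 0"
  and e0: "v 0 \<le> tf al c1 be c2 ga 0" and e1: "v 1 \<le> tf al c1 be c2 ga 1"
  shows "\<forall>x\<in>{0..1}. v x \<le> tf al c1 be c2 ga x"
proof -
  let ?u = "tf al c1 be c2 ga" and ?u' = "tf' al c1 be c2"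
  have "\<forall>x\<in>{0..1}. (\<lambda>x. ?u x - v x) x \<ge> 0"
  proof (rule max_principle[where h=h and q=q and dd="\<lambda>x. ?u' x - w x"
        and r="\<lambda>x. (al * Lc c1 x * exp (c1 * x) + be * Lc c2 x * exp (c2 * x) + q x * (tf al c1 be c2 0 x)) - q x * v x"])
    show "\<forall>x\<in>{0..1}. h x > 0" by (rule hpos)
    show "\<forall>x\<in>{0..1}. q x > 0" by (rule qpos)
    show "\<forall>x\<in>{0..1}. ((\<lambda>x. ?u x - v x) has_real_derivative ?u' x - w x) (at x within {0..1})"
      using s unfolding sol_def
      by (auto intro!: derivative_eq_intros has_field_derivative_at_within[OF tf_deriv])
    show "\<forall>x\<in>{0<..<1}. ((\<lambda>t. h t * (?u' t - w t)) has_real_derivative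
       (al * Lc c1 x * exp (c1 * x) + be * Lc c2 x * exp (c2 * x) + q x * (tf al c1 be c2 0 x)) - q x * v x) (at x)"
    proof
      fix x :: real assume x: "x \<in> {0<..<1}"
      have a: "((\<lambda>t. h t * w t) has_real_derivative q x * v x) (at x)"
        using s x unfolding sol_def by (intro interior_at) auto
      have b: "((\<lambda>t. h t * ?u' t) has_real_derivative
        (al * Lc c1 x * exp (c1 * x) + be * Lc c2 x * exp (c2 * x) + q x * (tf al c1 be c2 0 x))) (at x)"
        using x by (intro tf_pder) auto
      have "((\<lambda>t. h t * ?u' t - h t * w t) has_real_derivative
       (al * Lc c1 x * exp (c1 * x) + be * Lc c2 x * exp (c2 * x) + q x * (tf al c1 be c2 0 x)) - q x * v x) (at x)"
        using DERIV_diff[OF b a] .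
      then show "((\<lambda>t. h t * (?u' t - w t)) has_real_derivative
       (al * Lc c1 x * exp (c1 * x) + be * Lc c2 x * exp (c2 * x) + q x * (tf al c1 be c2 0 x)) - q x * v x) (at x)"
        by (simp add: right_diff_distrib)
    qed
    show "\<forall>x\<in>{0<..<1}. (al * Lc c1 x * exp (c1 * x) + be * Lc c2 x * exp (c2 * x) + q x * (tf al c1 be c2 0 x)) - q x * v x
       \<le> q x * (?u x - v x)"
    proof
      fix x :: real assume x: "x \<in> {0<..<1}"
      have "al * Lc c1 x * exp (c1 * x) \<le> 0" using c1 x by (simp add: mult_nonpos_nonneg)
      moreover have "be * Lc c2 x * exp (c2 * x) \<le> 0" using c2 x by (simp add: mult_nonpos_nonneg)
      moreover have "q x * ga \<ge> 0" using qpos x ga by (intro mult_nonneg_nonneg) (auto intro: less_imp_le)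
      moreover have "q x * (?u x) = q x * (tf al c1 be c2 0 x) + q x * ga" unfolding tf_def by (simp add: algebra_simps)
      ultimately show "(al * Lc c1 x * exp (c1 * x) + be * Lc c2 x * exp (c2 * x) + q x * (tf al c1 be c2 0 x)) - q x * v x
       \<le> q x * (?u x - v x)" by (simp add: algebra_simps)
    qed
  qed (use e0 e1 in auto)
  then show ?thesis by auto
qed

lemma sub_cmp:
  assumes s: "sol v w"
  and c1: "\<forall>x\<in>{0..1}. al * Lc c1 x \<ge> 0" and c2: "\<forall>x\<in>{0..1}. be * Lc c2 x \<ge> 0" and ga: "ga \<le> 0"
  and e0: "tf al c1 be c2 ga 0 \<le> v 0" and e1: "tf al c1 be c2 ga 1 \<le> v 1"
  shows "\<forall>x\<in>{0..1}. tf al c1 be c2 ga x \<le> v x"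
proof -
  have s': "sol (\<lambda>x. - v x) (\<lambda>x. - w x)"
  proof -
    { fix x :: real assume x: "x \<in> {0..1}"
      have "((\<lambda>t. - (h t * w t)) has_real_derivative - (q x * v x)) (at x within {0..1})"
        using s x unfolding sol_def by (intro DERIV_minus) auto
      then have "((\<lambda>t. h t * - w t) has_real_derivative q x * - v x) (at x within {0..1})" by simp
      moreover have "((\<lambda>x. - v x) has_real_derivative - w x) (at x within {0..1})"
        using s x unfolding sol_def by (intro DERIV_minus) auto
      ultimately have "((\<lambda>x. - v x) has_real_derivative - w x) (at x within {0..1}) \<and>
        ((\<lambda>t. h t * - w t) has_real_derivative q x * - v x) (at x within {0..1})" by blast }
    then show ?thesis unfolding sol_def by blast
  qed
  have "\<forall>x\<in>{0..1}. - v x \<le> tf (-al) c1 (-be) c2 (-ga) x"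
    by (rule super_cmp[OF s']) (use c1 c2 ga e0 e1 in \<open>auto simp: tf_def\<close>)
  then show ?thesis by (auto simp: tf_def)
qed

end


lemma aux1: "(D::real) \<noteq> 0 \<Longrightarrow> 1/D*(-x) + (-F/D)*y = (-x - F*y)/D" by (simp add: field_simps)
lemma aux2: "(D::real) \<noteq> 0 \<Longrightarrow> G/D*b + (-G/D)*(-a) = (a+b)*G/D" by (simp add: field_simps)

context rad begin

lemma sol_diff_der:
  assumes "sol v w" "x \<in> {0..1}"
  shows "((\<lambda>x. v x - tf al c1 be c2 ga x) has_real_derivative w x - tf' al c1 be c2 x) (at x within {0..1})"
  using assms unfolding sol_def
  by (auto intro!: derivative_eq_intros has_field_derivative_at_within[OF tf_deriv])

lemma sub_cmp_d:
  assumes s: "sol v w"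
  and c1: "\<forall>x\<in>{0..1}. al * Lc c1 x \<ge> 0" and c2: "\<forall>x\<in>{0..1}. be * Lc c2 x \<ge> 0" and ga: "ga \<le> 0"
  and e0: "tf al c1 be c2 ga 0 \<le> v 0" and e1: "tf al c1 be c2 ga 1 \<le> v 1"
  shows "(tf al c1 be c2 ga 0 = v 0 \<longrightarrow> tf' al c1 be c2 0 \<le> w 0) \<and>
         (tf al c1 be c2 ga 1 = v 1 \<longrightarrow> w 1 \<le> tf' al c1 be c2 1)"
proof -
  have le: "\<forall>x\<in>{0..1}. v x - tf al c1 be c2 ga x \<ge> 0" using sub_cmp[OF assms] by auto
  show ?thesis
    using endpoint0[OF le _ sol_diff_der[OF s, of 0]] endpoint1[OF le _ sol_diff_der[OF s, of 1]]
    by auto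
qed

lemma super_cmp_d:
  assumes s: "sol v w"
  and c1: "\<forall>x\<in>{0..1}. al * Lc c1 x \<le> 0" and c2: "\<forall>x\<in>{0..1}. be * Lc c2 x \<le> 0" and ga: "ga \<ge> 0"
  and e0: "v 0 \<le> tf al c1 be c2 ga 0" and e1: "v 1 \<le> tf al c1 be c2 ga 1"
  shows "(tf al c1 be c2 ga 0 = v 0 \<longrightarrow> w 0 \<le> tf' al c1 be c2 0) \<and>
         (tf al c1 be c2 ga 1 = v 1 \<longrightarrow> tf' al c1 be c2 1 \<le> w 1)"
proof -
  have le: "\<forall>x\<in>{0..1}. -(v x - tf al c1 be c2 ga x) \<ge> 0" using super_cmp[OF assms] by auto
  have d: "\<And>x. x \<in> {0..1} \<Longrightarrow> ((\<lambda>x. -(v x - tf al c1 be c2 ga x)) has_real_derivative -(w x - tf' al c1 be c2 x)) (at x within {0..1})"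
    by (intro DERIV_minus sol_diff_der[OF s])
  show ?thesis
    using endpoint0[OF le _ d[of 0]] endpoint1[OF le _ d[of 1]]
    by auto
qed

lemma bounds10:
  assumes s: "sol v w" and v0: "v 0 = 1" and v1: "v 1 = 0"
  and a: "a > 0" and b: "b > 0"
  and sub: "\<forall>x\<in>{0..1}. Lc a x \<ge> 0 \<and> Lc (-a) x \<ge> 0"
  and sup: "\<forall>x\<in>{0..1}. Lc b x \<le> 0 \<and> Lc (-b) x \<le> 0"
  shows "- a / (1 - exp (-a)) \<le> w 0" "w 0 \<le> - b"
    "- (a + b) * exp (-b) / (1 - exp (-a-b)) \<le> w 1" "w 1 \<le> 0"
proof -
  define E where "E = exp (-a)"
  define F where "F = exp (-a-b)"
  have E: "0 < E" "E < 1" using a by (auto simp: E_def)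
  have F: "0 < F" "F < 1" using a b by (auto simp: F_def)
  have r1: "(tf (1/(1-E)) (-a) 0 0 (-E/(1-E)) 0 = v 0 \<longrightarrow> tf' (1/(1-E)) (-a) 0 0 0 \<le> w 0) \<and>
         (tf (1/(1-E)) (-a) 0 0 (-E/(1-E)) 1 = v 1 \<longrightarrow> w 1 \<le> tf' (1/(1-E)) (-a) 0 0 1)"
  proof (rule sub_cmp_d[OF s])
    show "\<forall>x\<in>{0..1}. 1 / (1 - E) * Lc (- a) x \<ge> 0" using sub E by auto
    show "tf (1 / (1 - E)) (- a) 0 0 (- E / (1 - E)) 0 \<le> v 0" using v0 E
      by (simp add: tf_def divide_simps)
    show "tf (1 / (1 - E)) (- a) 0 0 (- E / (1 - E)) 1 \<le> v 1" using v1 E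
      by (simp add: tf_def divide_simps E_def)
  qed (use E in auto)
  have t10: "tf (1/(1-E)) (-a) 0 0 (-E/(1-E)) 0 = v 0" using v0 E by (simp add: tf_def divide_simps)
  have t11: "tf (1/(1-E)) (-a) 0 0 (-E/(1-E)) 1 = v 1" using v1 E by (simp add: tf_def divide_simps E_def)
  show "- a / (1 - exp (-a)) \<le> w 0" using r1 t10 by (simp add: tf'_def E_def)
  have "w 1 \<le> 1 / (1 - E) * - a * E" using r1 t11 by (simp add: tf'_def E_def)
  also have "\<dots> \<le> 0" using E a by (simp add: mult_nonneg_nonneg mult_nonpos_nonneg divide_simps)
  finally show "w 1 \<le> 0" .
  have r2: "(tf 1 (-b) 0 0 0 0 = v 0 \<longrightarrow> w 0 \<le> tf' 1 (-b) 0 0 0) \<and>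
         (tf 1 (-b) 0 0 0 1 = v 1 \<longrightarrow> tf' 1 (-b) 0 0 1 \<le> w 1)"
    by (rule super_cmp_d[OF s]) (use sup v0 v1 in \<open>auto simp: tf_def\<close>)
  then show "w 0 \<le> - b" using v0 by (simp add: tf_def tf'_def)
  have r3: "(tf (1/(1-F)) (-b) (-F/(1-F)) a 0 0 = v 0 \<longrightarrow> w 0 \<le> tf' (1/(1-F)) (-b) (-F/(1-F)) a 0) \<and>
         (tf (1/(1-F)) (-b) (-F/(1-F)) a 0 1 = v 1 \<longrightarrow> tf' (1/(1-F)) (-b) (-F/(1-F)) a 1 \<le> w 1)"
  proof (rule super_cmp_d[OF s])
    show "\<forall>x\<in>{0..1}. 1 / (1 - F) * Lc (- b) x \<le> 0" using sup F by (auto simp: divide_nonpos_pos)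
    show "\<forall>x\<in>{0..1}. - F / (1 - F) * Lc a x \<le> 0" using sub F
      by (auto simp: mult_nonpos_nonneg divide_simps)
    show "v 0 \<le> tf (1 / (1 - F)) (- b) (- F / (1 - F)) a 0 0" using v0 F by (simp add: tf_def divide_simps)
    show "v 1 \<le> tf (1 / (1 - F)) (- b) (- F / (1 - F)) a 0 1" using v1 F
      by (simp add: tf_def divide_simps F_def flip: exp_add)
  qed simp
  have t31: "tf (1/(1-F)) (-b) (-F/(1-F)) a 0 1 = v 1" using v1 F
    by (simp add: tf_def divide_simps F_def flip: exp_add)
  have Fa: "F * exp a = exp (-b)" by (simp add: F_def flip: exp_add)
  have "tf' (1/(1-F)) (-b) (-F/(1-F)) a 1 = (-b * exp (-b) - a * (F * exp a)) / (1 - F)"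
    using F unfolding tf'_def by (simp add: diff_divide_distrib add_divide_distrib algebra_simps)
  also have "\<dots> = - (a + b) * exp (-b) / (1 - F)" unfolding Fa by (simp add: algebra_simps)
  finally have "tf' (1/(1-F)) (-b) (-F/(1-F)) a 1 = - (a + b) * exp (-b) / (1 - F)" .
  then show "- (a + b) * exp (-b) / (1 - exp (-a-b)) \<le> w 1" using r3 t31 by (simp add: F_def)
qed

lemma bounds01:
  assumes s: "sol v w" and v0: "v 0 = 0" and v1: "v 1 = 1"
  and a: "a > 0" and b: "b > 0"
  and sub: "\<forall>x\<in>{0..1}. Lc a x \<ge> 0 \<and> Lc (-a) x \<ge> 0"
  and sup: "\<forall>x\<in>{0..1}. Lc b x \<le> 0 \<and> Lc (-b) x \<le> 0"
  shows "w 1 \<le> a / (1 - exp (-a))" "b \<le> w 1"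
    "w 0 \<le> (a + b) * exp (-b) / (1 - exp (-a-b))" "0 \<le> w 0"
proof -
  define E where "E = exp (-a)"
  define F where "F = exp (-a-b)"
  have E: "0 < E" "E < 1" using a by (auto simp: E_def)
  have F: "0 < F" "F < 1" using a b by (auto simp: F_def)
  have r1: "(tf (E/(1-E)) a 0 0 (-E/(1-E)) 0 = v 0 \<longrightarrow> tf' (E/(1-E)) a 0 0 0 \<le> w 0) \<and>
         (tf (E/(1-E)) a 0 0 (-E/(1-E)) 1 = v 1 \<longrightarrow> w 1 \<le> tf' (E/(1-E)) a 0 0 1)"
  proof (rule sub_cmp_d[OF s])
    show "\<forall>x\<in>{0..1}. E / (1 - E) * Lc a x \<ge> 0" using sub E by auto
    show "tf (E / (1 - E)) a 0 0 (- E / (1 - E)) 0 \<le> v 0" using v0 E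
      by (simp add: tf_def divide_simps)
    show "tf (E / (1 - E)) a 0 0 (- E / (1 - E)) 1 \<le> v 1" using v1 E
      by (simp add: tf_def divide_simps E_def flip: exp_add)
  qed (use E in auto)
  have t10: "tf (E/(1-E)) a 0 0 (-E/(1-E)) 0 = v 0" using v0 E by (simp add: tf_def divide_simps)
  have t11: "tf (E/(1-E)) a 0 0 (-E/(1-E)) 1 = v 1" using v1 E by (simp add: tf_def divide_simps E_def flip: exp_add)
  have "w 1 \<le> E / (1 - E) * a * exp a" using r1 t11 by (simp add: tf'_def)
  also have "\<dots> = a / (1 - exp (-a))" using E by (simp add: E_def divide_simps flip: exp_add)
  finally show "w 1 \<le> a / (1 - exp (-a))" .
  have "0 \<le> E / (1 - E) * a" using E a by simp
  also have "\<dots> \<le> w 0" using r1 t10 by (simp add: tf'_def)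
  finally show "0 \<le> w 0" .
  have r2: "(tf E' b 0 0 0 0 = v 0 \<longrightarrow> w 0 \<le> tf' E' b 0 0 0) \<and>
         (tf E' b 0 0 0 1 = v 1 \<longrightarrow> tf' E' b 0 0 1 \<le> w 1)" if "E' = exp (-b)" for E'
    by (rule super_cmp_d[OF s]) (use sup v0 v1 that in \<open>auto simp: tf_def mult_nonneg_nonpos simp flip: exp_add\<close>)
  moreover have "exp (-b) * b * exp b = b" by (simp add: mult.commute mult.left_commute flip: exp_add)
  ultimately show "b \<le> w 1" using v1 by (simp add: tf_def tf'_def flip: exp_add)
  have r3: "(tf (G/(1-F)) b (-G/(1-F)) (-a) 0 0 = v 0 \<longrightarrow> w 0 \<le> tf' (G/(1-F)) b (-G/(1-F)) (-a) 0) \<and>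
         (tf (G/(1-F)) b (-G/(1-F)) (-a) 0 1 = v 1 \<longrightarrow> tf' (G/(1-F)) b (-G/(1-F)) (-a) 1 \<le> w 1)"
    if G: "G = exp (-b)" for G
  proof (rule super_cmp_d[OF s])
    show "\<forall>x\<in>{0..1}. G / (1 - F) * Lc b x \<le> 0" using sup F G by (auto simp: mult_nonneg_nonpos divide_nonpos_pos)
    show "\<forall>x\<in>{0..1}. - G / (1 - F) * Lc (-a) x \<le> 0" using sub F G
      by (auto simp: mult_nonpos_nonneg divide_simps)
    show "v 0 \<le> tf (G / (1 - F)) b (- G / (1 - F)) (-a) 0 0" using v0 F by (simp add: tf_def divide_simps)
    show "v 1 \<le> tf (G / (1 - F)) b (- G / (1 - F)) (-a) 0 1" using v1 F G
      by (simp add: tf_def divide_simps F_def flip: exp_add)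
  qed simp
  have t30: "tf (exp (-b)/(1-F)) b (-exp (-b)/(1-F)) (-a) 0 0 = v 0" using v0 F
    by (simp add: tf_def divide_simps)
  have "tf' (exp (-b)/(1-F)) b (-exp (-b)/(1-F)) (-a) 0 = (a + b) * exp (-b) / (1 - F)"
    using F unfolding tf'_def by (simp add: diff_divide_distrib add_divide_distrib algebra_simps)
  then show "w 0 \<le> (a + b) * exp (-b) / (1 - exp (-a-b))" using r3[OF refl] t30 by (simp add: F_def)
qed

end


lemma clamp01_in: "clamp 0 1 (x::real) \<in> {0..1}"
  using clamp_in_interval[of 0 1 x] by (simp add: cbox_interval)

lemma clamp01_id: "(x::real) \<in> {0..1} \<Longrightarrow> clamp 0 1 x = x"
  using clamp_cancel_cbox[of x 0 1] by (simp add: cbox_interval)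

definition mkC :: "(real \<Rightarrow> real) \<Rightarrow> (real \<Rightarrow>\<^sub>C real)" where
  "mkC f = (SOME g. \<forall>x. apply_bcontfun g x = f (clamp 0 1 x))"

lemma mkC: assumes "continuous_on {0..1} f" shows "apply_bcontfun (mkC f) x = f (clamp 0 1 x)"
proof -
  have "continuous_on (cbox 0 1) f" using assms by simp
  then obtain g :: "real \<Rightarrow>\<^sub>C real" where "\<And>x. x \<in> cbox 0 1 \<Longrightarrow> g x = f x" "\<And>x. g x = f (clamp 0 1 x)"
    by (rule continuous_on_cbox_bcontfunE) blast
  then have "\<exists>g :: real \<Rightarrow>\<^sub>C real. \<forall>x. apply_bcontfun g x = f (clamp 0 1 x)" by blast
  then show ?thesis unfolding mkC_def by (rule someI_ex[where P="\<lambda>g. \<forall>x. apply_bcontfun g x = f (clamp 0 1 x)", THEN spec])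
qed

lemma exp_int:
  fixes K y :: real assumes K: "K > 0" and y: "0 \<le> y"
  shows "integral {0..y} (\<lambda>t. exp (K*t)) = (exp (K*y) - 1) / K"
proof -
  have "((\<lambda>t. exp (K*t)) has_integral (exp (K*y)/K - exp (K*0)/K)) {0..y}"
  proof (rule fundamental_theorem_of_calculus[OF y, of "\<lambda>t. exp (K*t)/K"])
    show "\<And>x. x \<in> {0..y} \<Longrightarrow> ((\<lambda>t. exp (K*t)/K) has_vector_derivative exp (K*x)) (at x within {0..y})"
      using K by (auto intro!: derivative_eq_intros simp flip: has_real_derivative_iff_has_vector_derivative)
  qed
  then show ?thesis by (simp add: integral_unique diff_divide_distrib)
qed

lemma key_bound:
  fixes K y M :: real and G :: "real \<Rightarrow> real"
  assumes K: "K > 0" and y: "0 \<le> y" and G: "continuous_on {0..y} G" and M: "\<forall>t\<in>{0..y}. \<bar>G t\<bar> \<le> M"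
  shows "exp (-K*y) * \<bar>integral {0..y} (\<lambda>t. exp (K*t) * G t)\<bar> \<le> M / K"
proof -
  have i1: "(\<lambda>t. exp (K*t) * G t) integrable_on {0..y}"
    by (intro integrable_continuous_real continuous_on_mult G continuous_on_exp continuous_on_mult_left continuous_on_id)
  have i2: "(\<lambda>t. M * exp (K*t)) integrable_on {0..y}"
    by (intro integrable_continuous_real continuous_on_mult_left continuous_on_exp continuous_on_id)
  have "norm (integral {0..y} (\<lambda>t. exp (K*t) * G t)) \<le> integral {0..y} (\<lambda>t. M * exp (K*t))"
  proof (rule integral_norm_bound_integral[OF i1 i2])
    fix t assume t: "t \<in> {0..y}"
    have "\<bar>G t\<bar> \<le> M" using M t by blast
    then show "norm (exp (K*t) * G t) \<le> M * exp (K*t)"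
      by (simp add: abs_mult mult.commute mult_right_mono)
  qed
  then have "\<bar>integral {0..y} (\<lambda>t. exp (K*t) * G t)\<bar> \<le> integral {0..y} (\<lambda>t. M * exp (K*t))" by simp
  also have "\<dots> = M * ((exp (K*y) - 1) / K)" using exp_int[OF K y] by simp
  finally have "exp (-K*y) * \<bar>integral {0..y} (\<lambda>t. exp (K*t) * G t)\<bar> \<le> exp (-K*y) * (M * ((exp (K*y) - 1) / K))"
    by (intro mult_left_mono) auto
  also have "\<dots> = M * (1 - exp (-K*y)) / K"
    by (simp add: algebra_simps diff_divide_distrib flip: exp_add)
  also have "\<dots> \<le> M / K"
  proof -
    have "M \<ge> 0" using M y by (metis abs_ge_zero atLeastAtMost_iff order.trans order_refl)
    moreover have "1 - exp (-K*y) \<le> 1" by simp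
    ultimately have "M * (1 - exp (-K*y)) \<le> M" by (rule mult_left_le[rotated])
    then show ?thesis using K by (intro divide_right_mono) auto
  qed
  finally show ?thesis .
qed


lemma cont_int:
  fixes G :: "real \<Rightarrow> real"
  assumes "continuous_on {0..1} G"
  shows "continuous_on {0..1} (\<lambda>y. integral {0..y} G)"
  using integral_has_real_derivative[OF assms] by (intro DERIV_continuous_on) blast

lemma bound_on01:
  fixes g :: "real \<Rightarrow> real"
  assumes "continuous_on {0..1} g"
  obtains B where "B \<ge> 0" "\<forall>x\<in>{0..1}. \<bar>g x\<bar> \<le> B"
proof -
  obtain x where "x \<in> {0..1}" "\<forall>y\<in>{0..1}. \<bar>g y\<bar> \<le> \<bar>g x\<bar>"
    using continuous_attains_sup[OF compact_Icc _ continuous_on_rabs[OF assms]] by auto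
  then show ?thesis using that[of "\<bar>g x\<bar>"] by auto
qed

definition Jop :: "real \<Rightarrow> real \<Rightarrow> (real \<Rightarrow> real) \<Rightarrow> (real \<Rightarrow> real) \<Rightarrow> real \<Rightarrow> real" where
  "Jop K c g z y = exp (-K*y) * (c + integral {0..y} (\<lambda>t. exp (K*t) * (g t * z t)))"

lemma Jop_cont:
  assumes "continuous_on {0..1} g"
  shows "continuous_on {0..1} (Jop K c g (apply_bcontfun z))"
  unfolding Jop_def
  by (intro continuous_intros cont_int assms continuous_on_subset[OF continuous_on_apply_bcontfun]) auto

lemma Jop_lip:
  fixes z z' :: "real \<Rightarrow>\<^sub>C real"
  assumes g: "continuous_on {0..1} g" and B: "\<forall>x\<in>{0..1}. \<bar>g x\<bar> \<le> B" and K: "K > 0"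
  shows "dist (mkC (Jop K c g z)) (mkC (Jop K c g z')) \<le> B * dist z z' / K"
proof (rule dist_bound)
  fix x
  define y :: real where "y = clamp 0 1 x"
  have y: "y \<in> {0..1}" unfolding y_def by (rule clamp01_in)
  have cz: "continuous_on {0..y} (\<lambda>t. g t * (z t - z' t))"
    using y by (intro continuous_intros continuous_on_subset[OF g]
       continuous_on_subset[OF continuous_on_apply_bcontfun]) auto
  have ci: "\<And>w::real \<Rightarrow>\<^sub>C real. (\<lambda>t. exp (K*t) * (g t * w t)) integrable_on {0..y}"
    using y by (intro integrable_continuous_real continuous_intros continuous_on_subset[OF g]
       continuous_on_subset[OF continuous_on_apply_bcontfun]) auto
  have "dist (mkC (Jop K c g z) x) (mkC (Jop K c g z') x) = \<bar>Jop K c g z y - Jop K c g z' y\<bar>"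
    by (simp add: mkC[OF Jop_cont[OF g]] y_def dist_real_def)
  also have "Jop K c g z y - Jop K c g z' y =
      exp (-K*y) * integral {0..y} (\<lambda>t. exp (K*t) * (g t * (z t - z' t)))"
  proof -
    have e: "(\<lambda>t. exp (K*t) * (g t * (z t - z' t))) = (\<lambda>t. exp (K*t) * (g t * z t) - exp (K*t) * (g t * z' t))"
      by (simp add: algebra_simps)
    show ?thesis unfolding Jop_def e integral_diff[OF ci[of z] ci[of z']]
      by (simp add: algebra_simps)
  qed
  also have "\<bar>exp (-K*y) * integral {0..y} (\<lambda>t. exp (K*t) * (g t * (z t - z' t)))\<bar>
     = exp (-K*y) * \<bar>integral {0..y} (\<lambda>t. exp (K*t) * (g t * (z t - z' t)))\<bar>"
    by (simp add: abs_mult)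
  also have "\<dots> \<le> (B * dist z z') / K"
  proof (rule key_bound[OF K _ cz])
    show "0 \<le> y" using y by simp
    show "\<forall>t\<in>{0..y}. \<bar>g t * (z t - z' t)\<bar> \<le> B * dist z z'"
    proof
      fix t assume t: "t \<in> {0..y}"
      have "\<bar>g t\<bar> \<le> B" using B t y by auto
      moreover have "\<bar>z t - z' t\<bar> \<le> dist z z'" using dist_bounded[of z t z'] by (simp add: dist_real_def)
      ultimately show "\<bar>g t * (z t - z' t)\<bar> \<le> B * dist z z'"
        by (simp add: abs_mult mult_mono')
    qed
  qed
  finally show "dist (mkC (Jop K c g z) x) (mkC (Jop K c g z') x) \<le> B * dist z z' / K" .
qed


lemma sq_aux: "(c::real) \<ge> 0 \<Longrightarrow> sqrt ((c*a)\<^sup>2 + (c*b)\<^sup>2) = c * sqrt (b\<^sup>2 + a\<^sup>2)"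
proof -
  assume c: "c \<ge> 0"
  have "(c*a)\<^sup>2 + (c*b)\<^sup>2 = c\<^sup>2 * (b\<^sup>2 + a\<^sup>2)" by (simp add: power_mult_distrib algebra_simps)
  then show ?thesis using c by (simp add: real_sqrt_mult)
qed

lemma ivp_exists:
  fixes g1 g2 :: "real \<Rightarrow> real" and V0 P0 :: real
  assumes c1: "continuous_on {0..1} g1" and c2: "continuous_on {0..1} g2"
  shows "\<exists>V P. V 0 = V0 \<and> P 0 = P0 \<and> (\<forall>x\<in>{0..1}.
     (V has_real_derivative g1 x * P x) (at x within {0..1}) \<and>
     (P has_real_derivative g2 x * V x) (at x within {0..1}))"
proof -
  obtain B1 where B1: "B1 \<ge> 0" "\<forall>x\<in>{0..1}. \<bar>g1 x\<bar> \<le> B1" using bound_on01[OF c1] by blast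
  obtain B2 where B2: "B2 \<ge> 0" "\<forall>x\<in>{0..1}. \<bar>g2 x\<bar> \<le> B2" using bound_on01[OF c2] by blast
  define B where "B = max B1 B2 + 1"
  have Bpos: "B > 0" using B1 B2 by (simp add: B_def)
  define K where "K = 4 * B"
  have K: "K > 0" using Bpos by (simp add: K_def)
  have B1': "\<forall>x\<in>{0..1}. \<bar>g1 x\<bar> \<le> B" using B1 by (force simp: B_def)
  have B2': "\<forall>x\<in>{0..1}. \<bar>g2 x\<bar> \<le> B" using B2 by (force simp: B_def)
  define Phi :: "(real \<Rightarrow>\<^sub>C real) \<times> (real \<Rightarrow>\<^sub>C real) \<Rightarrow> (real \<Rightarrow>\<^sub>C real) \<times> (real \<Rightarrow>\<^sub>C real)"
    where "Phi Z = (mkC (Jop K V0 g1 (snd Z)), mkC (Jop K P0 g2 (fst Z)))" for Z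
  have BK: "B / K = 1/4" using Bpos by (simp add: K_def)
  have lip: "dist (Phi Z) (Phi Z') \<le> (1/4) * dist Z Z'" for Z Z'
  proof -
    have d1: "dist (fst (Phi Z)) (fst (Phi Z')) \<le> (1/4) * dist (snd Z) (snd Z')"
      using Jop_lip[OF c1 B1' K, of V0 "snd Z" "snd Z'"] BK by (simp add: Phi_def)
    have d2: "dist (snd (Phi Z)) (snd (Phi Z')) \<le> (1/4) * dist (fst Z) (fst Z')"
      using Jop_lip[OF c2 B2' K, of P0 "fst Z" "fst Z'"] BK by (simp add: Phi_def)
    have "dist (Phi Z) (Phi Z') = sqrt ((dist (fst (Phi Z)) (fst (Phi Z')))\<^sup>2 + (dist (snd (Phi Z)) (snd (Phi Z')))\<^sup>2)"
      by (simp add: dist_prod_def)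
    also have "\<dots> \<le> sqrt (((1/4) * dist (snd Z) (snd Z'))\<^sup>2 + ((1/4) * dist (fst Z) (fst Z'))\<^sup>2)"
      using d1 d2 by (intro real_sqrt_le_mono add_mono power_mono) auto
    also have "\<dots> = (1/4) * sqrt ((dist (fst Z) (fst Z'))\<^sup>2 + (dist (snd Z) (snd Z'))\<^sup>2)"
      by (rule sq_aux) simp
    also have "\<dots> = (1/4) * dist Z Z'" by (simp add: dist_prod_def)
    finally show ?thesis .
  qed
  obtain Z where Z: "Phi Z = Z" using banach_fix_type[of "1/4" Phi] lip by auto
  define Z1 where "Z1 = fst Z"
  define Z2 where "Z2 = snd Z"
  have Z1: "\<And>y. y \<in> {0..1} \<Longrightarrow> Z1 y = Jop K V0 g1 Z2 y"
  proof -
    fix y :: real assume y: "y \<in> {0..1}"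
    have "Z1 y = mkC (Jop K V0 g1 Z2) y" unfolding Z1_def Z2_def
      by (subst Z[symmetric]) (simp add: Phi_def)
    also have "\<dots> = Jop K V0 g1 Z2 y" by (simp add: mkC[OF Jop_cont[OF c1]] clamp01_id[OF y])
    finally show "Z1 y = Jop K V0 g1 Z2 y" .
  qed
  have Z2: "\<And>y. y \<in> {0..1} \<Longrightarrow> Z2 y = Jop K P0 g2 Z1 y"
  proof -
    fix y :: real assume y: "y \<in> {0..1}"
    have "Z2 y = mkC (Jop K P0 g2 Z1) y" unfolding Z1_def Z2_def
      by (subst Z[symmetric]) (simp add: Phi_def)
    also have "\<dots> = Jop K P0 g2 Z1 y" by (simp add: mkC[OF Jop_cont[OF c2]] clamp01_id[OF y])
    finally show "Z2 y = Jop K P0 g2 Z1 y" .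
  qed
  define V where "V y = V0 + integral {0..y} (\<lambda>t. exp (K*t) * (g1 t * Z2 t))" for y
  define P where "P y = P0 + integral {0..y} (\<lambda>t. exp (K*t) * (g2 t * Z1 t))" for y
  have VZ: "V y = exp (K*y) * Z1 y" if "y \<in> {0..1}" for y
    using Z1[OF that] by (simp add: Jop_def V_def mult.assoc flip: exp_add)
  have PZ: "P y = exp (K*y) * Z2 y" if "y \<in> {0..1}" for y
    using Z2[OF that] by (simp add: Jop_def P_def mult.assoc flip: exp_add)
  have cV: "continuous_on {0..1} (\<lambda>t. exp (K*t) * (g1 t * Z2 t))"
    by (intro continuous_intros c1 continuous_on_subset[OF continuous_on_apply_bcontfun]) auto
  have cP: "continuous_on {0..1} (\<lambda>t. exp (K*t) * (g2 t * Z1 t))"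
    by (intro continuous_intros c2 continuous_on_subset[OF continuous_on_apply_bcontfun]) auto
  show ?thesis
  proof (intro exI conjI ballI)
    show "V 0 = V0" by (simp add: V_def)
    show "P 0 = P0" by (simp add: P_def)
  next
    fix x :: real assume x: "x \<in> {0..1}"
    have "(V has_real_derivative 0 + exp (K*x) * (g1 x * Z2 x)) (at x within {0..1})"
      unfolding V_def by (intro DERIV_add DERIV_const integral_has_real_derivative cV x)
    moreover have "exp (K*x) * (g1 x * Z2 x) = g1 x * P x" using PZ[OF x] by simp
    ultimately show "(V has_real_derivative g1 x * P x) (at x within {0..1})" by simp
    have "(P has_real_derivative 0 + exp (K*x) * (g2 x * Z1 x)) (at x within {0..1})"
      unfolding P_def by (intro DERIV_add DERIV_const integral_has_real_derivative cP x)
    moreover have "exp (K*x) * (g2 x * Z1 x) = g2 x * V x" using VZ[OF x] by simp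
    ultimately show "(P has_real_derivative g2 x * V x) (at x within {0..1})" by simp
  qed
qed


context rad begin

lemma sol_lin:
  assumes s1: "sol v1 w1" and s2: "sol v2 w2"
  shows "sol (\<lambda>x. c1 * v1 x + c2 * v2 x) (\<lambda>x. c1 * w1 x + c2 * w2 x)"
  unfolding sol_def
proof
  fix x :: real assume x: "x \<in> {0..1}"
  have a: "(v1 has_real_derivative w1 x) (at x within {0..1})" "((\<lambda>t. h t * w1 t) has_real_derivative q x * v1 x) (at x within {0..1})"
    using s1 x unfolding sol_def by auto
  have b: "(v2 has_real_derivative w2 x) (at x within {0..1})" "((\<lambda>t. h t * w2 t) has_real_derivative q x * v2 x) (at x within {0..1})"
    using s2 x unfolding sol_def by auto
  have "((\<lambda>t. c1 * (h t * w1 t) + c2 * (h t * w2 t)) has_real_derivative c1 * (q x * v1 x) + c2 * (q x * v2 x)) (at x within {0..1})"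
    by (intro DERIV_add DERIV_cmult a b)
  moreover have "(\<lambda>t. c1 * (h t * w1 t) + c2 * (h t * w2 t)) = (\<lambda>t. h t * (c1 * w1 t + c2 * w2 t))"
    by (simp add: algebra_simps)
  moreover have "c1 * (q x * v1 x) + c2 * (q x * v2 x) = q x * (c1 * v1 x + c2 * v2 x)"
    by (simp add: algebra_simps)
  ultimately have "((\<lambda>t. h t * (c1 * w1 t + c2 * w2 t)) has_real_derivative q x * (c1 * v1 x + c2 * v2 x)) (at x within {0..1})"
    by simp
  moreover have "((\<lambda>x. c1 * v1 x + c2 * v2 x) has_real_derivative c1 * w1 x + c2 * w2 x) (at x within {0..1})"
    by (intro DERIV_add DERIV_cmult a b)
  ultimately show "((\<lambda>x. c1 * v1 x + c2 * v2 x) has_real_derivative c1 * w1 x + c2 * w2 x) (at x within {0..1}) \<and>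
     ((\<lambda>t. h t * (c1 * w1 t + c2 * w2 t)) has_real_derivative q x * (c1 * v1 x + c2 * v2 x)) (at x within {0..1})"
    by blast
qed

lemma sol_zero:
  assumes s: "sol v w" and v0: "v 0 = 0" and v1: "v 1 = 0"
  shows "w 0 = 0" "w 1 = 0"
proof -
  have z: "tf 0 0 0 0 0 x = 0" "tf' 0 0 0 0 x = 0" for x by (simp_all add: tf_def tf'_def)
  have A: "(tf 0 0 0 0 0 0 = v 0 \<longrightarrow> tf' 0 0 0 0 0 \<le> w 0) \<and> (tf 0 0 0 0 0 1 = v 1 \<longrightarrow> w 1 \<le> tf' 0 0 0 0 1)"
    by (rule sub_cmp_d[OF s]) (use v0 v1 z in auto)
  have B: "(tf 0 0 0 0 0 0 = v 0 \<longrightarrow> w 0 \<le> tf' 0 0 0 0 0) \<and> (tf 0 0 0 0 0 1 = v 1 \<longrightarrow> tf' 0 0 0 0 1 \<le> w 1)"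
    by (rule super_cmp_d[OF s]) (use v0 v1 z in auto)
  show "w 0 = 0" "w 1 = 0" using A B v0 v1 z by auto
qed

lemma sol_unique:
  assumes s1: "sol v1 w1" and s2: "sol v2 w2" and "v1 0 = v2 0" "v1 1 = v2 1"
  shows "w1 0 = w2 0" "w1 1 = w2 1"
proof -
  have s: "sol (\<lambda>x. 1 * v1 x + (-1) * v2 x) (\<lambda>x. 1 * w1 x + (-1) * w2 x)" by (rule sol_lin[OF s1 s2])
  show "w1 0 = w2 0" "w1 1 = w2 1" using sol_zero[OF s] assms(3,4) by auto
qed

lemma ivp_sol:
  assumes "\<forall>x\<in>{0..1}. (V has_real_derivative (1 / h x) * P x) (at x within {0..1}) \<and>
     (P has_real_derivative q x * V x) (at x within {0..1})"
  shows "sol V (\<lambda>x. P x / h x)"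
  unfolding sol_def
proof
  fix x :: real assume x: "x \<in> {0..1}"
  have "(V has_real_derivative P x / h x) (at x within {0..1})" using assms x by simp
  moreover have "((\<lambda>t. h t * (P t / h t)) has_real_derivative q x * V x) (at x within {0..1})"
  proof (rule has_field_derivative_transform_within[where f=P and d=1])
    show "(P has_real_derivative q x * V x) (at x within {0..1})" using assms x by blast
  qed (use x hpos in force)+
  ultimately show "(V has_real_derivative P x / h x) (at x within {0..1}) \<and>
    ((\<lambda>t. h t * (P t / h t)) has_real_derivative q x * V x) (at x within {0..1})" by blast
qed

lemma bvp_exists:
  assumes cq: "continuous_on {0..1} q"
  shows "\<exists>v w. sol v w \<and> v 0 = a \<and> v 1 = b"
proof -
  have ch: "continuous_on {0..1} h"
  proof (rule DERIV_continuous_on)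
    fix x :: real assume "x \<in> {0..1}"
    then show "(h has_real_derivative h' x) (at x within {0..1})"
      using hder by (auto intro: has_field_derivative_at_within[of h])
  qed
  have cg: "continuous_on {0..1} (\<lambda>x. 1 / h x)"
    using hpos by (intro continuous_intros ch) auto
  obtain V1 P1 where I1: "V1 0 = 1" "P1 0 = 0" "\<forall>x\<in>{0..1}. (V1 has_real_derivative (1 / h x) * P1 x) (at x within {0..1}) \<and>
     (P1 has_real_derivative q x * V1 x) (at x within {0..1})"
    using ivp_exists[OF cg cq, of 1 0] by blast
  obtain V2 P2 where I2: "V2 0 = 0" "P2 0 = 1" "\<forall>x\<in>{0..1}. (V2 has_real_derivative (1 / h x) * P2 x) (at x within {0..1}) \<and>
     (P2 has_real_derivative q x * V2 x) (at x within {0..1})"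
    using ivp_exists[OF cg cq, of 0 1] by blast
  have s1: "sol V1 (\<lambda>x. P1 x / h x)" by (rule ivp_sol[OF I1(3)])
  have s2: "sol V2 (\<lambda>x. P2 x / h x)" by (rule ivp_sol[OF I2(3)])
  have nz: "V2 1 \<noteq> 0"
  proof
    assume "V2 1 = 0"
    then have "P2 0 / h 0 = 0" using sol_zero(1)[OF s2 I2(1)] by simp
    moreover have "h 0 > 0" using hpos by auto
    ultimately show False using I2(2) by simp
  qed
  define c where "c = (b - a * V1 1) / V2 1"
  have "sol (\<lambda>x. a * V1 x + c * V2 x) (\<lambda>x. a * (P1 x / h x) + c * (P2 x / h x))"
    by (rule sol_lin[OF s1 s2])
  moreover have "a * V1 0 + c * V2 0 = a" using I1 I2 by simp
  moreover have "a * V1 1 + c * V2 1 = b" using nz by (simp add: c_def)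
  ultimately show ?thesis by blast
qed

end


definition hF :: "(real \<Rightarrow> real) \<Rightarrow> nat \<Rightarrow> real \<Rightarrow> real" where
  "hF f n x = f x powr ((real n - 2) / 2)"
definition hF' :: "(real \<Rightarrow> real) \<Rightarrow> nat \<Rightarrow> real \<Rightarrow> real" where
  "hF' f n x = ((real n - 2) / 2) * f x powr ((real n - 2) / 2 - 1) * deriv f x"
definition qF :: "(real \<Rightarrow> real) \<Rightarrow> nat \<Rightarrow> real \<Rightarrow> real \<Rightarrow> real \<Rightarrow> real" where
  "qF f n mu lam x = f x powr ((real n - 2) / 2) * mu - lam * f x powr (real n / 2)"

lemma smooth_der0: "smooth_fun f \<Longrightarrow> (f has_real_derivative deriv f x) (at x)"
  unfolding smooth_fun_def by (drule spec[of _ 0]) simp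

lemma smooth_der1: "smooth_fun f \<Longrightarrow> (deriv f has_real_derivative deriv (deriv f) x) (at x)"
  unfolding smooth_fun_def by (drule spec[of _ 1]) simp

lemma smooth_cont: "smooth_fun f \<Longrightarrow> continuous_on S f"
  by (rule DERIV_continuous_on, rule has_field_derivative_at_within, erule smooth_der0)

lemma smooth_cont1: "smooth_fun f \<Longrightarrow> continuous_on S (deriv f)"
  by (rule DERIV_continuous_on, rule has_field_derivative_at_within, erule smooth_der1)

lemma powr_cont:
  assumes "smooth_fun f" "\<forall>x\<in>{0..1}. f x > 0"
  shows "continuous_on {0..1} (\<lambda>x. f x powr r)"
proof (rule continuous_on_powr)
  show "continuous_on {0..1} f" by (rule smooth_cont[OF assms(1)])
  show "continuous_on {0..1} (\<lambda>x. r)" by (rule continuous_on_const)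
  show "\<forall>x\<in>{0..1}. f x \<noteq> 0" using assms(2) by force
qed

lemma hF_der:
  assumes "smooth_fun f" "f x > 0"
  shows "(hF f n has_real_derivative hF' f n x) (at x)"
proof -
  have "((\<lambda>x. (\<lambda>z. z powr ((real n - 2) / 2)) (f x)) has_real_derivative
     ((real n - 2) / 2) * f x powr ((real n - 2) / 2 - 1) * deriv f x) (at x)"
    by (rule DERIV_chain2[OF has_real_derivative_powr[OF assms(2)] smooth_der0[OF assms(1)]])
  then show ?thesis unfolding hF_def hF'_def by simp
qed

lemma hF'_cont:
  assumes "smooth_fun f" "\<forall>x\<in>{0..1}. f x > 0"
  shows "continuous_on {0..1} (hF' f n)"
proof -
  have c1: "continuous_on {0..1} (\<lambda>x. f x powr ((real n - 2)/2 - 1))" by (rule powr_cont[OF assms])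
  have c2: "continuous_on {0..1} (deriv f)" by (rule smooth_cont1[OF assms(1)])
  show ?thesis unfolding hF'_def by (intro continuous_on_mult continuous_on_const c1 c2)
qed

lemma qF_cont:
  assumes "smooth_fun f" "\<forall>x\<in>{0..1}. f x > 0"
  shows "continuous_on {0..1} (qF f n mu lam)"
proof -
  have c1: "continuous_on {0..1} (\<lambda>x. f x powr ((real n - 2)/2))" by (rule powr_cont[OF assms])
  have c2: "continuous_on {0..1} (\<lambda>x. f x powr (real n / 2))" by (rule powr_cont[OF assms])
  show ?thesis unfolding qF_def by (intro continuous_on_mult continuous_on_const continuous_on_diff c1 c2)
qed

lemma rad_inst:
  assumes "smooth_fun f" "\<forall>x\<in>{0..1}. f x > 0" "\<forall>x\<in>{0..1}. qF f n mu lam x > 0"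
  shows "rad (hF f n) (hF' f n) (qF f n mu lam)"
  using assms hF_der unfolding rad_def hF_def by auto

lemma radial_iff:
  assumes "rad (hF f n) h' (qF f n mu lam)"
  shows "radial_bvp_sol f n mu lam a b v w \<longleftrightarrow> rad.sol (hF f n) (qF f n mu lam) v w \<and> v 0 = a \<and> v 1 = b"
  unfolding radial_bvp_sol_def rad.sol_def[OF assms] by (auto simp: hF_def qF_def)

lemma dn_eq:
  assumes sm: "smooth_fun f" and fp: "\<forall>x\<in>{0..1}. f x > 0" and qp: "\<forall>x\<in>{0..1}. qF f n mu lam x > 0"
  and s: "rad.sol (hF f n) (qF f n mu lam) v w" "v 0 = a" "v 1 = b"
  shows "dn_mode f n mu lam a b = (- w 0 / sqrt (f 0), w 1 / sqrt (f 1))"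
proof -
  interpret rad "hF f n" "hF' f n" "qF f n mu lam" by (rule rad_inst[OF sm fp qp])
  show ?thesis unfolding dn_mode_def
  proof (rule the_equality)
    show "\<exists>v' w'. radial_bvp_sol f n mu lam a b v' w' \<and> (- w 0 / sqrt (f 0), w 1 / sqrt (f 1)) = (- w' 0 / sqrt (f 0), w' 1 / sqrt (f 1))"
      using s radial_iff[OF rad_inst[OF sm fp qp]] by blast
  next
    fix pq assume "\<exists>v' w'. radial_bvp_sol f n mu lam a b v' w' \<and> pq = (- w' 0 / sqrt (f 0), w' 1 / sqrt (f 1))"
    then obtain v' w' where "sol v' w'" "v' 0 = a" "v' 1 = b" "pq = (- w' 0 / sqrt (f 0), w' 1 / sqrt (f 1))"
      using radial_iff[OF rad_inst[OF sm fp qp]] by blast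
    then show "pq = (- w 0 / sqrt (f 0), w 1 / sqrt (f 1))"
      using sol_unique[OF s(1), of v' w'] s by auto
  qed
qed


lemma sub_aux:
  fixes hx h'x L c s d hmin H1 R :: real
  assumes hmin: "0 < hmin" "hmin \<le> hx" and H1: "\<bar>h'x\<bar> \<le> H1" and R: "\<bar>L\<bar> \<le> R"
    and s: "s \<ge> 1" and d: "0 < d" "d \<le> 1" and sd: "s * d * hmin \<ge> 2 * H1 + R + 1"
    and c: "\<bar>c\<bar> = s * (1 + d)"
  shows "hx * c\<^sup>2 + h'x * c - (hx * s\<^sup>2 - L) \<ge> 0"
proof -
  have c2: "c\<^sup>2 = s\<^sup>2 * (1 + d)\<^sup>2" using c by (metis power2_abs power_mult_distrib)
  have "hx * c\<^sup>2 - hx * s\<^sup>2 = hx * s\<^sup>2 * (2 * d + d\<^sup>2)" unfolding c2 by (simp add: algebra_simps power2_eq_square)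
  also have "\<dots> \<ge> hx * s\<^sup>2 * d" using hmin d by (intro mult_left_mono) auto
  moreover have "hx * s\<^sup>2 * d \<ge> hmin * s\<^sup>2 * d" using hmin d by (intro mult_right_mono) auto
  moreover have "hmin * s\<^sup>2 * d = s * (s * d * hmin)" by (simp add: power2_eq_square)
  moreover have "s * (s * d * hmin) \<ge> s * (2 * H1 + R + 1)" using s sd by (intro mult_left_mono) auto
  moreover have "s * (2 * H1 + R + 1) \<ge> 2 * H1 * s + R + 1"
  proof -
    have "R \<ge> 0" using R by linarith
    then have "s * (R + 1) \<ge> R + 1" using s mult_right_mono[of 1 s "R+1"] by simp
    then show ?thesis by (simp add: algebra_simps)
  qed
  ultimately have A: "hx * c\<^sup>2 - hx * s\<^sup>2 \<ge> 2 * H1 * s + R + 1" by linarith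
  have "h'x * c \<ge> - (H1 * \<bar>c\<bar>)"
  proof -
    have "\<bar>h'x * c\<bar> \<le> H1 * \<bar>c\<bar>" unfolding abs_mult using H1 by (intro mult_right_mono) auto
    then show ?thesis by linarith
  qed
  moreover have "H1 * \<bar>c\<bar> \<le> 2 * H1 * s"
  proof -
    have "H1 \<ge> 0" using H1 by linarith
    moreover have "\<bar>c\<bar> \<le> 2 * s" using c d s by simp
    ultimately show ?thesis by (metis mult.assoc mult_left_mono mult.commute)
  qed
  moreover have "L \<ge> - R" using R by linarith
  ultimately show ?thesis using A by linarith
qed

lemma super_aux:
  fixes hx h'x L c s d hmin H1 R :: real
  assumes hmin: "0 < hmin" "hmin \<le> hx" and H1: "\<bar>h'x\<bar> \<le> H1" and R: "\<bar>L\<bar> \<le> R"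
    and s: "s \<ge> 1" and d: "0 < d" "d \<le> 1" and sd: "s * d * hmin \<ge> 2 * H1 + R + 1"
    and c: "\<bar>c\<bar> = s * (1 - d)"
  shows "hx * c\<^sup>2 + h'x * c - (hx * s\<^sup>2 - L) \<le> 0"
proof -
  have c2: "c\<^sup>2 = s\<^sup>2 * (1 - d)\<^sup>2" using c by (metis power2_abs power_mult_distrib)
  have "hx * c\<^sup>2 - hx * s\<^sup>2 = - (hx * s\<^sup>2 * (2 * d - d\<^sup>2))" unfolding c2 by (simp add: algebra_simps power2_eq_square)
  moreover have "hx * s\<^sup>2 * (2 * d - d\<^sup>2) \<ge> hx * s\<^sup>2 * d"
  proof -
    have "d\<^sup>2 \<le> d" using d by (simp add: power2_eq_square mult_left_le)
    then show ?thesis using hmin by (intro mult_left_mono) auto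
  qed
  moreover have "hx * s\<^sup>2 * d \<ge> hmin * s\<^sup>2 * d" using hmin d by (intro mult_right_mono) auto
  moreover have "hmin * s\<^sup>2 * d = s * (s * d * hmin)" by (simp add: power2_eq_square)
  moreover have "s * (s * d * hmin) \<ge> s * (2 * H1 + R + 1)" using s sd by (intro mult_left_mono) auto
  moreover have "s * (2 * H1 + R + 1) \<ge> H1 * s + R + 1"
  proof -
    have "R \<ge> 0" "H1 \<ge> 0" using R H1 by linarith+
    then have "s * (R + 1) \<ge> R + 1" "s * H1 \<ge> 0" using s mult_right_mono[of 1 s "R+1"] by simp_all
    then show ?thesis by (simp add: algebra_simps)
  qed
  ultimately have A: "hx * c\<^sup>2 - hx * s\<^sup>2 \<le> - (H1 * s + R + 1)" by linarith
  have "h'x * c \<le> H1 * \<bar>c\<bar>"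
  proof -
    have "\<bar>h'x * c\<bar> \<le> H1 * \<bar>c\<bar>" unfolding abs_mult using H1 by (intro mult_right_mono) auto
    then show ?thesis by linarith
  qed
  moreover have "H1 * \<bar>c\<bar> \<le> H1 * s"
  proof -
    have "H1 \<ge> 0" using H1 by linarith
    moreover have "\<bar>c\<bar> \<le> s" using c d s by simp
    ultimately show ?thesis by (metis mult_left_mono)
  qed
  moreover have "L \<le> R" using R by linarith
  ultimately show ?thesis using A by linarith
qed

lemma q_aux:
  fixes hx L s d hmin H1 R :: real
  assumes hmin: "0 < hmin" "hmin \<le> hx" and R: "\<bar>L\<bar> \<le> R" and H1: "H1 \<ge> 0"
    and s: "s \<ge> 1" and d: "0 < d" "d \<le> 1" and sd: "s * d * hmin \<ge> 2 * H1 + R + 1"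
  shows "hx * s\<^sup>2 - L > 0"
proof -
  have "hx * s\<^sup>2 \<ge> hmin * s\<^sup>2" using hmin by (intro mult_right_mono) auto
  moreover have "hmin * s\<^sup>2 \<ge> hmin * s\<^sup>2 * d" using hmin d by (simp add: mult_left_le)
  moreover have "hmin * s\<^sup>2 * d = s * (s * d * hmin)" by (simp add: power2_eq_square)
  moreover have "s * (s * d * hmin) \<ge> 1 * (2 * H1 + R + 1)" using s sd H1 R
    by (intro mult_mono) auto
  moreover have "L \<le> R" using R by (simp add: abs_le_iff)
  ultimately have "2 * H1 + R + 1 \<le> hx * s\<^sup>2" by (smt (verit))
  then show ?thesis using H1 \<open>L \<le> R\<close> by linarith
qed


lemma hl1: "(s::real) > 0 \<Longrightarrow> c > 0 \<Longrightarrow> lo * s \<le> x \<Longrightarrow> lo / c \<le> x / c / s"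
proof -
  assume s: "s > 0" and c: "c > 0" and l: "lo * s \<le> x"
  have "lo \<le> x / s" using s l by (simp add: pos_le_divide_eq)
  then have "lo / c \<le> (x / s) / c" using c by (intro divide_right_mono) auto
  then show ?thesis by (simp add: divide_divide_eq_left mult.commute)
qed

lemma hl2: "(s::real) > 0 \<Longrightarrow> c > 0 \<Longrightarrow> x \<le> hi * s \<Longrightarrow> x / c / s \<le> hi / c"
proof -
  assume s: "s > 0" and c: "c > 0" and l: "x \<le> hi * s"
  have "x / s \<le> hi" using s l by (simp add: pos_divide_le_eq)
  then have "(x / s) / c \<le> hi / c" using c by (intro divide_right_mono) auto
  then show ?thesis by (simp add: divide_divide_eq_left mult.commute)
qed

lemma fixed_mu:
  fixes f :: "real \<Rightarrow> real" and n :: nat and lam mu s d hmin H1 R :: real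
  assumes sm: "smooth_fun f" and fp: "\<forall>x\<in>{0..1}. f x > 0"
  and hmin: "0 < hmin" "\<forall>x\<in>{0..1}. hmin \<le> hF f n x"
  and H1: "\<forall>x\<in>{0..1}. \<bar>hF' f n x\<bar> \<le> H1"
  and R: "\<forall>x\<in>{0..1}. \<bar>lam * f x powr (real n / 2)\<bar> \<le> R"
  and mu: "mu = s\<^sup>2" and s: "s \<ge> 1" and d: "0 < d" "d \<le> 1/2" and sd: "s * d * hmin \<ge> 2 * H1 + R + 1"
  shows "(1 - d) / sqrt (f 0) \<le> fst (dn_mode f n mu lam 1 0) / s"
        "fst (dn_mode f n mu lam 1 0) / s \<le> (1 + d) / (1 - exp (-(s*(1+d)))) / sqrt (f 0)"
        "- (2 * exp (-(s*(1-d))) / (1 - exp (-(2 * s)))) / sqrt (f 1) \<le> snd (dn_mode f n mu lam 1 0) / s"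
        "snd (dn_mode f n mu lam 1 0) / s \<le> 0"
        "- (2 * exp (-(s*(1-d))) / (1 - exp (-(2 * s)))) / sqrt (f 0) \<le> fst (dn_mode f n mu lam 0 1) / s"
        "fst (dn_mode f n mu lam 0 1) / s \<le> 0"
        "(1 - d) / sqrt (f 1) \<le> snd (dn_mode f n mu lam 0 1) / s"
        "snd (dn_mode f n mu lam 0 1) / s \<le> (1 + d) / (1 - exp (-(s*(1+d)))) / sqrt (f 1)"
proof -
  have z01: "(0::real) \<in> {0..1}" by simp
  have "\<bar>hF' f n 0\<bar> \<le> H1" by (rule bspec[OF H1 z01])
  then have H1nn: "H1 \<ge> 0" by (meson abs_ge_zero order_trans)
  have qform: "\<forall>x\<in>{0..1}. qF f n mu lam x = hF f n x * s\<^sup>2 - lam * f x powr (real n / 2)"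
    by (simp add: qF_def hF_def mu)
  have d1: "d \<le> 1" using d by simp
  have qp: "\<forall>x\<in>{0..1}. qF f n mu lam x > 0"
  proof
    fix x :: real assume x: "x \<in> {0..1}"
    show "qF f n mu lam x > 0" unfolding qform[rule_format, OF x]
      by (rule q_aux[OF hmin(1) _ _ H1nn s d(1) d1 sd]) (use hmin R x in auto)
  qed
  interpret rad "hF f n" "hF' f n" "qF f n mu lam" by (rule rad_inst[OF sm fp qp])
  define a where "a = s * (1 + d)"
  define b where "b = s * (1 - d)"
  have a: "a > 0" and b: "b > 0" using s d by (auto simp: a_def b_def)
  have sub: "\<forall>x\<in>{0..1}. Lc a x \<ge> 0 \<and> Lc (-a) x \<ge> 0"
  proof
    fix x :: real assume x: "x \<in> {0..1}"
    have "\<And>c. \<bar>c\<bar> = s * (1 + d) \<Longrightarrow> Lc c x \<ge> 0"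
      unfolding Lc_def qform[rule_format, OF x]
      by (rule sub_aux[OF hmin(1) _ _ _ s d(1) d1 sd]) (use hmin H1 R x in auto)
    moreover have "\<bar>a\<bar> = s * (1 + d)" "\<bar>-a\<bar> = s * (1 + d)" using a by (auto simp: a_def)
    ultimately show "Lc a x \<ge> 0 \<and> Lc (-a) x \<ge> 0" by blast
  qed
  have sup: "\<forall>x\<in>{0..1}. Lc b x \<le> 0 \<and> Lc (-b) x \<le> 0"
  proof
    fix x :: real assume x: "x \<in> {0..1}"
    have "\<And>c. \<bar>c\<bar> = s * (1 - d) \<Longrightarrow> Lc c x \<le> 0"
      unfolding Lc_def qform[rule_format, OF x]
      by (rule super_aux[OF hmin(1) _ _ _ s d(1) d1 sd]) (use hmin H1 R x in auto)
    moreover have "\<bar>b\<bar> = s * (1 - d)" "\<bar>-b\<bar> = s * (1 - d)" using b by (auto simp: b_def)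
    ultimately show "Lc b x \<le> 0 \<and> Lc (-b) x \<le> 0" by blast
  qed
  have cq: "continuous_on {0..1} (qF f n mu lam)" by (rule qF_cont[OF sm fp])
  obtain v1 w1 where s1: "sol v1 w1" "v1 0 = 1" "v1 1 = 0" using bvp_exists[OF cq, of 1 0] by blast
  obtain v2 w2 where s2: "sol v2 w2" "v2 0 = 0" "v2 1 = 1" using bvp_exists[OF cq, of 0 1] by blast
  have dn1: "dn_mode f n mu lam 1 0 = (- w1 0 / sqrt (f 0), w1 1 / sqrt (f 1))"
    by (rule dn_eq[OF sm fp qp s1])
  have dn2: "dn_mode f n mu lam 0 1 = (- w2 0 / sqrt (f 0), w2 1 / sqrt (f 1))"
    by (rule dn_eq[OF sm fp qp s2])
  note B1 = bounds10[OF s1 a b sub sup]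
  note B2 = bounds01[OF s2 a b sub sup]
  have sp: "s > 0" using s by simp
  have f0: "sqrt (f 0) > 0" and f1: "sqrt (f 1) > 0" using fp by auto
  have ab: "a + b = 2 * s" "- a - b = - (2 * s)" by (auto simp: a_def b_def algebra_simps)
  have aa: "a / (1 - exp (-a)) = (1 + d) / (1 - exp (-(s*(1+d)))) * s" by (simp add: a_def mult.commute)
  have off: "(a + b) * exp (-b) / (1 - exp (-a-b)) = 2 * exp (-(s*(1-d))) / (1 - exp (-(2 * s))) * s"
    unfolding ab by (simp add: b_def mult.commute)
  have o1: "- (a + b) * exp (-b) / (1 - exp (-a-b)) = - ((a + b) * exp (-b) / (1 - exp (-a-b)))" by (metis minus_divide_left minus_mult_left)
  have o2: "- (2 * exp (-(s*(1-d))) / (1 - exp (-(2 * s)))) * s = - (2 * exp (-(s*(1-d))) / (1 - exp (-(2 * s))) * s)"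
    by simp
  show "(1 - d) / sqrt (f 0) \<le> fst (dn_mode f n mu lam 1 0) / s"
    unfolding dn1 fst_conv by (rule hl1[OF sp f0]) (use B1(2) in \<open>simp add: b_def mult.commute\<close>)
  show "fst (dn_mode f n mu lam 1 0) / s \<le> (1 + d) / (1 - exp (-(s*(1+d)))) / sqrt (f 0)"
    unfolding dn1 fst_conv by (rule hl2[OF sp f0]) (use B1(1) aa in linarith)
  show "- (2 * exp (-(s*(1-d))) / (1 - exp (-(2 * s)))) / sqrt (f 1) \<le> snd (dn_mode f n mu lam 1 0) / s"
    unfolding dn1 snd_conv by (rule hl1[OF sp f1]) (use B1(3) off o1 o2 in linarith)
  show "snd (dn_mode f n mu lam 1 0) / s \<le> 0"
    unfolding dn1 snd_conv using B1(4) f1 sp by (simp add: divide_nonpos_pos)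
  show "- (2 * exp (-(s*(1-d))) / (1 - exp (-(2 * s)))) / sqrt (f 0) \<le> fst (dn_mode f n mu lam 0 1) / s"
    unfolding dn2 fst_conv by (rule hl1[OF sp f0]) (use B2(3) off o2 in linarith)
  show "fst (dn_mode f n mu lam 0 1) / s \<le> 0"
    unfolding dn2 fst_conv using B2(4) f0 sp by (simp add: divide_nonpos_pos)
  show "(1 - d) / sqrt (f 1) \<le> snd (dn_mode f n mu lam 0 1) / s"
    unfolding dn2 snd_conv by (rule hl1[OF sp f1]) (use B2(2) in \<open>simp add: b_def mult.commute\<close>)
  show "snd (dn_mode f n mu lam 0 1) / s \<le> (1 + d) / (1 - exp (-(s*(1+d)))) / sqrt (f 1)"
    unfolding dn2 snd_conv by (rule hl2[OF sp f1]) (use B2(1) aa in linarith)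
qed


lemma lim_lo: "((\<lambda>mu::real. 1 - mu powr (-1/4)) \<longlongrightarrow> 1) at_top" by real_asymp
lemma lim_hi: "((\<lambda>mu::real. (1 + mu powr (-1/4)) / (1 - exp (-(sqrt mu * (1 + mu powr (-1/4)))))) \<longlongrightarrow> 1) at_top"
  by real_asymp
lemma lim_off: "((\<lambda>mu::real. 2 * exp (-(sqrt mu * (1 - mu powr (-1/4)))) / (1 - exp (-(2 * sqrt mu)))) \<longlongrightarrow> 0) at_top"
  by real_asymp
lemma lim_sd: "filterlim (\<lambda>mu::real. sqrt mu * mu powr (-1/4)) at_top at_top" by real_asymp
lemma lim_d: "((\<lambda>mu::real. mu powr (-1/4)) \<longlongrightarrow> 0) at_top" by real_asymp
lemma lim_s: "filterlim (\<lambda>mu::real. sqrt mu) at_top at_top" by real_asymp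

lemma asym:
  fixes f :: "real \<Rightarrow> real" and n :: nat and lam :: real
  assumes sm: "smooth_fun f" and fp: "\<forall>x\<in>{0..1}. f x > 0"
  shows "((\<lambda>mu. fst (dn_mode f n mu lam 1 0) / sqrt mu) \<longlongrightarrow> 1 / sqrt (f 0)) at_top"
    "((\<lambda>mu. snd (dn_mode f n mu lam 1 0) / sqrt mu) \<longlongrightarrow> 0) at_top"
    "((\<lambda>mu. fst (dn_mode f n mu lam 0 1) / sqrt mu) \<longlongrightarrow> 0) at_top"
    "((\<lambda>mu. snd (dn_mode f n mu lam 0 1) / sqrt mu) \<longlongrightarrow> 1 / sqrt (f 1)) at_top"
proof -
  have ch: "continuous_on {0..1} (hF f n)" unfolding hF_def by (rule powr_cont[OF sm fp])
  obtain x0 where x0: "x0 \<in> {0..1}" "\<forall>y\<in>{0..1}. hF f n x0 \<le> hF f n y"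
    using continuous_attains_inf[OF compact_Icc _ ch] by auto
  define hmin where "hmin = hF f n x0"
  have hmin: "0 < hmin" "\<forall>x\<in>{0..1}. hmin \<le> hF f n x"
  proof -
    have "f x0 > 0" using x0 fp by blast
    then show "0 < hmin" by (simp add: hmin_def hF_def)
    show "\<forall>x\<in>{0..1}. hmin \<le> hF f n x" using x0 by (simp add: hmin_def)
  qed
  obtain H1 where H1: "H1 \<ge> 0" "\<forall>x\<in>{0..1}. \<bar>hF' f n x\<bar> \<le> H1"
    using bound_on01[OF hF'_cont[OF sm fp]] by blast
  have cr: "continuous_on {0..1} (\<lambda>x. lam * f x powr (real n / 2))"
    by (intro continuous_on_mult continuous_on_const powr_cont[OF sm fp])
  obtain R where R: "R \<ge> 0" "\<forall>x\<in>{0..1}. \<bar>lam * f x powr (real n / 2)\<bar> \<le> R"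
    using bound_on01[OF cr] by blast
  define C where "C = (2 * H1 + R + 1) / hmin"
  have ev: "eventually (\<lambda>mu. mu > 0 \<and> sqrt mu \<ge> 1 \<and> mu powr (-1/4) \<le> 1/2 \<and> sqrt mu * mu powr (-1/4) \<ge> C) at_top"
  proof (intro eventually_conj)
    show "eventually (\<lambda>mu::real. mu > 0) at_top" by (rule eventually_gt_at_top)
    show "eventually (\<lambda>mu::real. sqrt mu \<ge> 1) at_top" using lim_s by (simp add: filterlim_at_top)
    show "eventually (\<lambda>mu::real. mu powr (-1/4) \<le> 1/2) at_top"
      using order_tendstoD(2)[OF lim_d, of "1/2"] by (auto elim: eventually_mono)
    show "eventually (\<lambda>mu::real. sqrt mu * mu powr (-1/4) \<ge> C) at_top" using lim_sd by (simp add: filterlim_at_top)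
  qed
  define lo where "lo mu = 1 - mu powr (-1/4)" for mu :: real
  define hi where "hi mu = (1 + mu powr (-1/4)) / (1 - exp (-(sqrt mu * (1 + mu powr (-1/4)))))" for mu :: real
  define off where "off mu = 2 * exp (-(sqrt mu * (1 - mu powr (-1/4)))) / (1 - exp (-(2 * sqrt mu)))" for mu :: real
  have B: "eventually (\<lambda>mu.
      lo mu / sqrt (f 0) \<le> fst (dn_mode f n mu lam 1 0) / sqrt mu \<and>
      fst (dn_mode f n mu lam 1 0) / sqrt mu \<le> hi mu / sqrt (f 0) \<and>
      - off mu / sqrt (f 1) \<le> snd (dn_mode f n mu lam 1 0) / sqrt mu \<and>
      snd (dn_mode f n mu lam 1 0) / sqrt mu \<le> 0 \<and>
      - off mu / sqrt (f 0) \<le> fst (dn_mode f n mu lam 0 1) / sqrt mu \<and>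
      fst (dn_mode f n mu lam 0 1) / sqrt mu \<le> 0 \<and>
      lo mu / sqrt (f 1) \<le> snd (dn_mode f n mu lam 0 1) / sqrt mu \<and>
      snd (dn_mode f n mu lam 0 1) / sqrt mu \<le> hi mu / sqrt (f 1)) at_top"
    using ev
  proof (rule eventually_mono)
    fix mu :: real assume m: "mu > 0 \<and> sqrt mu \<ge> 1 \<and> mu powr (-1/4) \<le> 1/2 \<and> sqrt mu * mu powr (-1/4) \<ge> C"
    have mu: "mu = (sqrt mu)\<^sup>2" using m by simp
    have dpos: "0 < mu powr (-1/4)" using m by simp
    have sd: "sqrt mu * mu powr (-1/4) * hmin \<ge> 2 * H1 + R + 1"
    proof -
      have "C * hmin \<le> sqrt mu * mu powr (-1/4) * hmin" using m hmin by (intro mult_right_mono) auto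
      moreover have "C * hmin = 2 * H1 + R + 1" using hmin by (simp add: C_def)
      ultimately show ?thesis by simp
    qed
    note F = fixed_mu[OF sm fp hmin H1(2) R(2) mu _ dpos _ sd]
    show "lo mu / sqrt (f 0) \<le> fst (dn_mode f n mu lam 1 0) / sqrt mu \<and>
      fst (dn_mode f n mu lam 1 0) / sqrt mu \<le> hi mu / sqrt (f 0) \<and>
      - off mu / sqrt (f 1) \<le> snd (dn_mode f n mu lam 1 0) / sqrt mu \<and>
      snd (dn_mode f n mu lam 1 0) / sqrt mu \<le> 0 \<and>
      - off mu / sqrt (f 0) \<le> fst (dn_mode f n mu lam 0 1) / sqrt mu \<and>
      fst (dn_mode f n mu lam 0 1) / sqrt mu \<le> 0 \<and>
      lo mu / sqrt (f 1) \<le> snd (dn_mode f n mu lam 0 1) / sqrt mu \<and>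
      snd (dn_mode f n mu lam 0 1) / sqrt mu \<le> hi mu / sqrt (f 1)"
      using F m unfolding lo_def hi_def off_def by auto
  qed
  have "f 0 > 0" "f 1 > 0" using fp by auto
  then have f0: "sqrt (f 0) \<noteq> 0" and f1: "sqrt (f 1) \<noteq> 0" by auto
  have Llo0: "((\<lambda>mu. lo mu / sqrt (f 0)) \<longlongrightarrow> 1 / sqrt (f 0)) at_top"
    unfolding lo_def by (intro tendsto_divide lim_lo tendsto_const f0)
  have Lhi0: "((\<lambda>mu. hi mu / sqrt (f 0)) \<longlongrightarrow> 1 / sqrt (f 0)) at_top"
    unfolding hi_def by (intro tendsto_divide lim_hi tendsto_const f0)
  have Llo1: "((\<lambda>mu. lo mu / sqrt (f 1)) \<longlongrightarrow> 1 / sqrt (f 1)) at_top"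
    unfolding lo_def by (intro tendsto_divide lim_lo tendsto_const f1)
  have Lhi1: "((\<lambda>mu. hi mu / sqrt (f 1)) \<longlongrightarrow> 1 / sqrt (f 1)) at_top"
    unfolding hi_def by (intro tendsto_divide lim_hi tendsto_const f1)
  have Loff0: "((\<lambda>mu. - off mu / sqrt (f 0)) \<longlongrightarrow> 0) at_top"
    using tendsto_divide[OF tendsto_minus[OF lim_off] tendsto_const f0] unfolding off_def by simp
  have Loff1: "((\<lambda>mu. - off mu / sqrt (f 1)) \<longlongrightarrow> 0) at_top"
    using tendsto_divide[OF tendsto_minus[OF lim_off] tendsto_const f1] unfolding off_def by simp
  show "((\<lambda>mu. fst (dn_mode f n mu lam 1 0) / sqrt mu) \<longlongrightarrow> 1 / sqrt (f 0)) at_top"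
    by (rule tendsto_sandwich[OF _ _ Llo0 Lhi0]) (use B in \<open>auto elim: eventually_mono\<close>)
  show "((\<lambda>mu. snd (dn_mode f n mu lam 1 0) / sqrt mu) \<longlongrightarrow> 0) at_top"
    by (rule tendsto_sandwich[OF _ _ Loff1 tendsto_const]) (use B in \<open>auto elim: eventually_mono\<close>)
  show "((\<lambda>mu. fst (dn_mode f n mu lam 0 1) / sqrt mu) \<longlongrightarrow> 0) at_top"
    by (rule tendsto_sandwich[OF _ _ Loff0 tendsto_const]) (use B in \<open>auto elim: eventually_mono\<close>)
  show "((\<lambda>mu. snd (dn_mode f n mu lam 0 1) / sqrt mu) \<longlongrightarrow> 1 / sqrt (f 1)) at_top"
    by (rule tendsto_sandwich[OF _ _ Llo1 Lhi1]) (use B in \<open>auto elim: eventually_mono\<close>)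
qed


lemma dn_matrix_entries:
  "dn_matrix f n mu lam $ 1 $ 1 = fst (dn_mode f n mu lam 1 0)"
  "dn_matrix f n mu lam $ 2 $ 2 = snd (dn_mode f n mu lam 0 1)"
  "dn_matrix f n mu lam $ 1 $ 2 = fst (dn_mode f n mu lam 0 1)"
  "dn_matrix f n mu lam $ 2 $ 1 = snd (dn_mode f n mu lam 1 0)"
  by (simp_all add: dn_matrix_def)

lemma tr_eq: "trace (dn_matrix f n mu lam) = fst (dn_mode f n mu lam 1 0) + snd (dn_mode f n mu lam 0 1)"
  by (simp add: trace_def sum_2 dn_matrix_entries)

lemma det_eq: "det (dn_matrix f n mu lam) =
   fst (dn_mode f n mu lam 1 0) * snd (dn_mode f n mu lam 0 1) - fst (dn_mode f n mu lam 0 1) * snd (dn_mode f n mu lam 1 0)"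
  by (simp add: det_2 dn_matrix_entries)

lemma div_id: "((a::real) * b - c * d) / (s * s) = (a / s) * (b / s) - (c / s) * (d / s)"
  by (simp add: diff_divide_distrib)

lemma seq_limits:
  fixes g :: "real \<Rightarrow> real" and mu :: "nat \<Rightarrow> real"
  assumes sm: "smooth_fun g" and gp: "\<forall>x\<in>{0..1}. g x > 0" and hmu: "filterlim mu at_top sequentially"
  shows "((\<lambda>m. trace (dn_matrix g n (mu m) lam) / sqrt (mu m)) \<longlongrightarrow> 1 / sqrt (g 0) + 1 / sqrt (g 1)) sequentially"
    "((\<lambda>m. det (dn_matrix g n (mu m) lam) / (sqrt (mu m) * sqrt (mu m))) \<longlongrightarrow> (1 / sqrt (g 0)) * (1 / sqrt (g 1)) - 0 * 0) sequentially"
proof -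
  note A = asym[OF sm gp, of n lam]
  have A11: "((\<lambda>m. fst (dn_mode g n (mu m) lam 1 0) / sqrt (mu m)) \<longlongrightarrow> 1 / sqrt (g 0)) sequentially"
    using filterlim_compose[OF A(1) hmu] by simp
  have A21: "((\<lambda>m. snd (dn_mode g n (mu m) lam 1 0) / sqrt (mu m)) \<longlongrightarrow> 0) sequentially"
    using filterlim_compose[OF A(2) hmu] by simp
  have A12: "((\<lambda>m. fst (dn_mode g n (mu m) lam 0 1) / sqrt (mu m)) \<longlongrightarrow> 0) sequentially"
    using filterlim_compose[OF A(3) hmu] by simp
  have A22: "((\<lambda>m. snd (dn_mode g n (mu m) lam 0 1) / sqrt (mu m)) \<longlongrightarrow> 1 / sqrt (g 1)) sequentially"
    using filterlim_compose[OF A(4) hmu] by simp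
  show "((\<lambda>m. trace (dn_matrix g n (mu m) lam) / sqrt (mu m)) \<longlongrightarrow> 1 / sqrt (g 0) + 1 / sqrt (g 1)) sequentially"
    unfolding tr_eq add_divide_distrib by (intro tendsto_add A11 A22)
  show "((\<lambda>m. det (dn_matrix g n (mu m) lam) / (sqrt (mu m) * sqrt (mu m))) \<longlongrightarrow> (1 / sqrt (g 0)) * (1 / sqrt (g 1)) - 0 * 0) sequentially"
    unfolding det_eq div_id by (intro tendsto_diff tendsto_mult A11 A22 A12 A21)
qed

lemma pair_eq:
  fixes a b c d :: real
  assumes "a + b = c + d" "a * b = c * d"
  shows "(a = c \<and> b = d) \<or> (a = d \<and> b = c)"
proof -
  have d: "d = a + b - c" using assms(1) by simp
  have "(a - c) * (c - b) = c * d - a * b" unfolding d by (simp add: algebra_simps)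
  also have "\<dots> = 0" using assms(2) by simp
  finally have "a = c \<or> c = b" by simp
  then show ?thesis using d by auto
qed

lemma inv_sqrt_inj:
  fixes x y :: real
  assumes "x > 0" "y > 0" "1 / sqrt x = 1 / sqrt y"
  shows "x = y"
  using assms by simp

theorem lemma3p3:
  fixes f ft :: "real \<Rightarrow> real" and n :: nat and mu :: "nat \<Rightarrow> real" and lam :: real
  assumes "n \<ge> 2"
    and "mu 0 = 0" and "0 < mu 1" and "mono mu" and "filterlim mu at_top sequentially"
    and "smooth_fun f" and "smooth_fun ft"
    and "\<forall>x\<in>{0..1}. f x > 0" and "\<forall>x\<in>{0..1}. ft x > 0"
    and "not_dirichlet_eigenvalue f n mu lam" and "not_dirichlet_eigenvalue ft n mu lam"
    and "\<forall>m. det (dn_matrix f n (mu m) lam) = det (dn_matrix ft n (mu m) lam)"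
    and "\<forall>m. trace (dn_matrix f n (mu m) lam) = trace (dn_matrix ft n (mu m) lam)"
  shows "(f 0 = ft 0 \<and> f 1 = ft 1) \<or> (f 0 = ft 1 \<and> f 1 = ft 0)"
proof -
  note Lf = seq_limits[OF assms(6) assms(8) assms(5), of n lam]
  note Lt = seq_limits[OF assms(7) assms(9) assms(5), of n lam]
  have eT: "(\<lambda>m. trace (dn_matrix f n (mu m) lam) / sqrt (mu m)) = (\<lambda>m. trace (dn_matrix ft n (mu m) lam) / sqrt (mu m))"
    using assms(13) by simp
  have eD: "(\<lambda>m. det (dn_matrix f n (mu m) lam) / (sqrt (mu m) * sqrt (mu m))) = (\<lambda>m. det (dn_matrix ft n (mu m) lam) / (sqrt (mu m) * sqrt (mu m)))"
    using assms(12) by simp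
  have s: "1 / sqrt (f 0) + 1 / sqrt (f 1) = 1 / sqrt (ft 0) + 1 / sqrt (ft 1)"
    using LIMSEQ_unique[OF Lf(1)] Lt(1) unfolding eT by blast
  have p: "(1 / sqrt (f 0)) * (1 / sqrt (f 1)) - 0 * 0 = (1 / sqrt (ft 0)) * (1 / sqrt (ft 1)) - 0 * 0"
    using LIMSEQ_unique[OF Lf(2)] Lt(2) unfolding eD by blast
  have pos: "f 0 > 0" "f 1 > 0" "ft 0 > 0" "ft 1 > 0" using assms(8,9) by auto
  from pair_eq[OF s] p
  have "(1 / sqrt (f 0) = 1 / sqrt (ft 0) \<and> 1 / sqrt (f 1) = 1 / sqrt (ft 1)) \<or>
        (1 / sqrt (f 0) = 1 / sqrt (ft 1) \<and> 1 / sqrt (f 1) = 1 / sqrt (ft 0))" by simp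
  then show ?thesis using inv_sqrt_inj pos by metis
qed


end
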